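(* Let $p$ be a positive continuous even function on $(-1,1)$ such that no nontrivial solution $u$ of $u''+pu=0$ has more than one zero in $(-1,1)$, and let $F$ be the solution of $\mathcal{S}F=2p$ with $F(0)=0$, $F'(0)=1$, $F''(0)=0$. If $\varphi:(-1,1)\to\mathbb{R}^n$ is a $C^3$ curve with $\varphi'(x)\neq0$ and $S_1\varphi(x)\le 2p(x)$ for all $x\in(-1,1)$, then $$\frac{|\varphi(x_1)-\varphi(x_2)|}{\{|\varphi'(x_1)|\,|\varphi'(x_2)|\}^{1/2}}\ \ge\ \frac{|F(x_1)-F(x_2)|}{\{F'(x_1)F'(x_2)\}^{1/2}}\qquad\text{for all } x_1,x_2\in(-1,1).$$
   Context: For a real function $g$ with $g'\neq0$, $\mathcal{S}g=(g''/g')'-\tfrac12(g''/g')^2$. Equivalently $F(x)=\int_0^x u_0(t)^{-2}dt$ where $u_0$ solves $u''+pu=0$, $u_0(0)=1$, $u_0'(0)=0$ (and $u_0$ has no zeros in $(-1,1)$). For a $C^3$ curve $\varphi$ into $\mathbb{R}^n$ with $\varphi'\neq0$, the Ahlfors Schwarzian is $S_1\varphi=\frac{\langle\varphi',\varphi'''\rangle}{|\varphi'|^2}-3\frac{\langle\varphi',\varphi''\rangle^2}{|\varphi'|^4}+\frac32\frac{|\varphi''|^2}{|\varphi'|^2}$, with Euclidean inner product and norm. *)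

theory Defs
  imports "HOL-Analysis.Analysis"
begin

text \<open>Schwarzian derivative of a real function at a point, written in terms of the
values g1 = g', g2 = g'', g3 = g''' there:
  (g''/g')' - 1/2 (g''/g')^2 = g'''/g' - (g''/g')^2 - 1/2 (g''/g')^2.\<close>
definition schwarzian_val :: "real \<Rightarrow> real \<Rightarrow> real \<Rightarrow> real" where
  "schwarzian_val g1 g2 g3 = (g3 / g1 - (g2 / g1)^2) - (1/2) * (g2 / g1)^2"

text \<open>Ahlfors Schwarzian of a curve at a point, in terms of the values d1, d2, d3 of
the first three derivatives there.\<close>
definition ahlfors_S1 :: "'a::real_inner \<Rightarrow> 'a \<Rightarrow> 'a \<Rightarrow> real" where
  "ahlfors_S1 d1 d2 d3 =
     (d1 \<bullet> d3) / (norm d1)^2 - 3 * (d1 \<bullet> d2)^2 / (norm d1)^4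
     + (3/2) * (norm d2)^2 / (norm d1)^2"

definition disconjugate :: "(real \<Rightarrow> real) \<Rightarrow> bool" where
  "disconjugate p \<longleftrightarrow>
    (\<forall>u u1 u2.
       (\<forall>x\<in>{-1<..<1}. (u has_real_derivative u1 x) (at x)
                      \<and> (u1 has_real_derivative u2 x) (at x)
                      \<and> u2 x + p x * u x = 0)
       \<and> (\<exists>x\<in>{-1<..<1}. u x \<noteq> 0)
       \<longrightarrow> \<not> (\<exists>a\<in>{-1<..<1}. \<exists>b\<in>{-1<..<1}. a \<noteq> b \<and> u a = 0 \<and> u b = 0))"

end

theory Submission
  imports Defs
begin

lemma inner_vderiv:
  fixes f g :: "real \<Rightarrow> 'a::real_inner"
  assumes "(f has_vector_derivative f') (at x)" "(g has_vector_derivative g') (at x)"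
  shows "((\<lambda>y. f y \<bullet> g y) has_real_derivative (f' \<bullet> g x + f x \<bullet> g')) (at x)"
proof -
  have "((\<lambda>y. f y \<bullet> g y) has_derivative (\<lambda>h. f x \<bullet> (h *\<^sub>R g') + (h *\<^sub>R f') \<bullet> g x)) (at x)"
    using has_derivative_inner[OF assms[unfolded has_vector_derivative_def]] by simp
  then show ?thesis unfolding has_field_derivative_def
    by (rule has_derivative_eq_rhs) (auto simp: algebra_simps)
qed

lemma vdiff_quot:
  fixes f :: "real \<Rightarrow> 'a::real_normed_vector"
  assumes "(f has_vector_derivative f') (at a)"
  shows "((\<lambda>y. (f y - f a) /\<^sub>R (y - a)) \<longlongrightarrow> f') (at a)"
proof -
  have "((\<lambda>y. ((f y - f a) - (y - a) *\<^sub>R f') /\<^sub>R norm (y - a)) \<longlongrightarrow> 0) (at a)"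
    using assms unfolding has_vector_derivative_def has_derivative_at_within by simp
  then have "((\<lambda>y. norm (((f y - f a) - (y - a) *\<^sub>R f') /\<^sub>R norm (y - a))) \<longlongrightarrow> 0) (at a)"
    using tendsto_norm_zero by blast
  then have "((\<lambda>y. norm ((f y - f a) /\<^sub>R (y - a) - f')) \<longlongrightarrow> 0) (at a)"
  proof (rule Lim_transform_eventually)
    show "\<forall>\<^sub>F y in at a. norm (((f y - f a) - (y - a) *\<^sub>R f') /\<^sub>R norm (y - a)) = norm ((f y - f a) /\<^sub>R (y - a) - f')"
      unfolding eventually_at_filter
    proof (intro always_eventually allI impI)
      fix y assume "y \<noteq> a"
      then have "(f y - f a) /\<^sub>R (y - a) - f' = ((f y - f a) - (y - a) *\<^sub>R f') /\<^sub>R (y - a)"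
        by (simp add: scaleR_diff_right)
      then show "norm (((f y - f a) - (y - a) *\<^sub>R f') /\<^sub>R norm (y - a)) = norm ((f y - f a) /\<^sub>R (y - a) - f')"
        by simp
    qed
  qed
  then show ?thesis
    using tendsto_norm_zero_iff LIM_zero_cancel by blast
qed



lemma key_ineq:
  fixes x a b :: "'a::real_inner"
  assumes "a \<bullet> a > 0"
  shows "(a\<bullet>a)^2*((a\<bullet>a) + x\<bullet>b)*(x\<bullet>x) - (a\<bullet>a)^2*(x\<bullet>a)^2 - (x\<bullet>a)*(a\<bullet>b)*(a\<bullet>a)*(x\<bullet>x)
        + (1/4)*(x\<bullet>x)^2*((a\<bullet>a)*(b\<bullet>b) - (a\<bullet>b)^2) \<ge> 0"
proof -
  define B where "B = a\<bullet>a"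
  define y where "y = (B*B) *\<^sub>R x - (B*(x\<bullet>a)) *\<^sub>R a + (1/2*(x\<bullet>x)*B) *\<^sub>R b - (1/2*(x\<bullet>x)*(a\<bullet>b)) *\<^sub>R a"
  have "y \<bullet> y = B * ((a\<bullet>a)^2*((a\<bullet>a) + x\<bullet>b)*(x\<bullet>x) - (a\<bullet>a)^2*(x\<bullet>a)^2 - (x\<bullet>a)*(a\<bullet>b)*(a\<bullet>a)*(x\<bullet>x)
        + (1/4)*(x\<bullet>x)^2*((a\<bullet>a)*(b\<bullet>b) - (a\<bullet>b)^2))"
    unfolding y_def B_def
    by (simp add: inner_add_left inner_add_right inner_diff_left inner_diff_right inner_commute
        algebra_simps power2_eq_square)
  moreover have "y \<bullet> y \<ge> 0" by simp
  ultimately show ?thesis using assms unfolding B_def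
    by (simp add: zero_le_mult_iff)
qed



lemma main:
  fixes p F F1 F2 F3 :: "real \<Rightarrow> real"
    and \<phi> \<phi>1 \<phi>2 \<phi>3 :: "real \<Rightarrow> 'a::euclidean_space"
  assumes F_d1: "\<forall>x\<in>{-1<..<1}. (F has_real_derivative F1 x) (at x)"
    and F_d2: "\<forall>x\<in>{-1<..<1}. (F1 has_real_derivative F2 x) (at x)"
    and F_d3: "\<forall>x\<in>{-1<..<1}. (F2 has_real_derivative F3 x) (at x)"
    and F_pos: "\<forall>x\<in>{-1<..<1}. F1 x > 0"
    and F_S: "\<forall>x\<in>{-1<..<1}. schwarzian_val (F1 x) (F2 x) (F3 x) = 2 * p x"
    and phi_d1: "\<forall>x\<in>{-1<..<1}. (\<phi> has_vector_derivative \<phi>1 x) (at x)"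
    and phi_d2: "\<forall>x\<in>{-1<..<1}. (\<phi>1 has_vector_derivative \<phi>2 x) (at x)"
    and phi_d3: "\<forall>x\<in>{-1<..<1}. (\<phi>2 has_vector_derivative \<phi>3 x) (at x)"
    and phi_nz: "\<forall>x\<in>{-1<..<1}. \<phi>1 x \<noteq> 0"
    and phi_S: "\<forall>x\<in>{-1<..<1}. ahlfors_S1 (\<phi>1 x) (\<phi>2 x) (\<phi>3 x) \<le> 2 * p x"
    and ab: "-1 < a" "a < b" "b < 1"
  shows "(F b - F a) / (sqrt (F1 a) * sqrt (F1 b))
           \<le> norm (\<phi> b - \<phi> a) / (sqrt (norm (\<phi>1 a)) * sqrt (norm (\<phi>1 b)))"
proof -
  define I where "I = {-1<..<1::real}"
  define R where "R = (\<lambda>x. \<phi> x - \<phi> a)"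
  define A where "A = (\<lambda>x. R x \<bullet> R x)"
  define r where "r = (\<lambda>x. sqrt (A x))"
  define P where "P = (\<lambda>x. R x \<bullet> \<phi>1 x)"
  define Q where "Q = (\<lambda>x. R x \<bullet> \<phi>2 x)"
  define B where "B = (\<lambda>x. \<phi>1 x \<bullet> \<phi>1 x)"
  define C where "C = (\<lambda>x. \<phi>1 x \<bullet> \<phi>2 x)"
  define D where "D = (\<lambda>x. \<phi>2 x \<bullet> \<phi>2 x)"
  define E where "E = (\<lambda>x. \<phi>1 x \<bullet> \<phi>3 x)"
  define s where "s = (\<lambda>x. sqrt (sqrt (B x)))"
  define \<sigma> where "\<sigma> = (\<lambda>x. sqrt (F1 x))"
  define u where "u = (\<lambda>x. (F x - F a) / \<sigma> x)"
  define u1 where "u1 = (\<lambda>x. \<sigma> x - (F x - F a) * F2 x / (2 * \<sigma> x ^ 3))"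
  define w where "w = (\<lambda>x. r x / s x)"
  define w1 where "w1 = (\<lambda>x. P x / (r x * s x) - r x * C x / (2 * s x ^ 5))"
  define w2 where "w2 = (\<lambda>x. (B x + Q x) / (r x * s x) - P x ^ 2 / (r x ^ 3 * s x)
      - P x * C x / (r x * s x ^ 5) - r x * (D x + E x) / (2 * s x ^ 5)
      + 5 * r x * C x ^ 2 / (4 * s x ^ 9))"
  define W where "W = (\<lambda>x. w1 x * u x - w x * u1 x)"
  define c where "c = s a / \<sigma> a"
  have aI: "a \<in> I" and bI: "b \<in> I" using ab by (auto simp: I_def)
  have dR: "(R has_vector_derivative \<phi>1 x) (at x)" if "x \<in> I" for x
    unfolding R_def using has_vector_derivative_diff[OF phi_d1[rule_format, OF that[unfolded I_def]]
        has_vector_derivative_const] by simp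
  have dphi1: "(\<phi>1 has_vector_derivative \<phi>2 x) (at x)" if "x \<in> I" for x
    using phi_d2 that unfolding I_def by blast
  have dphi2: "(\<phi>2 has_vector_derivative \<phi>3 x) (at x)" if "x \<in> I" for x
    using phi_d3 that unfolding I_def by blast
  have dA: "(A has_real_derivative 2 * P x) (at x)" if "x \<in> I" for x
    using inner_vderiv[OF dR[OF that] dR[OF that]] unfolding A_def P_def
    by (simp add: inner_commute)
  have dP: "(P has_real_derivative B x + Q x) (at x)" if "x \<in> I" for x
    using inner_vderiv[OF dR[OF that] dphi1[OF that]] unfolding B_def P_def Q_def
    by simp
  have dB: "(B has_real_derivative 2 * C x) (at x)" if "x \<in> I" for x
    using inner_vderiv[OF dphi1[OF that] dphi1[OF that]] unfolding B_def C_def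
    by (simp add: inner_commute)
  have dC: "(C has_real_derivative D x + E x) (at x)" if "x \<in> I" for x
    using inner_vderiv[OF dphi1[OF that] dphi2[OF that]] unfolding C_def D_def E_def
    by simp
  have Bpos: "B x > 0" if "x \<in> I" for x
    using phi_nz that unfolding B_def I_def by auto
  have spos: "s x > 0" if "x \<in> I" for x
    using Bpos[OF that] unfolding s_def by simp
  have s4: "s x ^ 4 = B x" if "x \<in> I" for x
  proof -
    have "s x ^ 4 = (sqrt (sqrt (B x)) ^ 2) ^ 2" unfolding s_def by simp
    also have "\<dots> = B x" using Bpos[OF that] by simp
    finally show ?thesis .
  qed
  have ds: "(s has_real_derivative C x / (2 * s x ^ 3)) (at x)" if "x \<in> I" for x
  proof -
    have "(s has_real_derivative inverse (sqrt (sqrt (B x))) / 2 * (inverse (sqrt (B x)) / 2 * (2 * C x))) (at x)"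
      unfolding s_def using Bpos[OF that]
      by (intro derivative_eq_intros DERIV_chain2[OF DERIV_real_sqrt] dB[OF that]) auto
    moreover have "sqrt (B x) = s x ^ 2" unfolding s_def using Bpos[OF that] by simp
    ultimately show ?thesis using spos[OF that] unfolding s_def
      by (simp add: field_simps power_def)
  qed
  have dF: "(F has_real_derivative F1 x) (at x)" if "x \<in> I" for x
    using F_d1 that unfolding I_def by blast
  have dF1: "(F1 has_real_derivative F2 x) (at x)" if "x \<in> I" for x
    using F_d2 that unfolding I_def by blast
  have dF2: "(F2 has_real_derivative F3 x) (at x)" if "x \<in> I" for x
    using F_d3 that unfolding I_def by blast
  have F1pos: "F1 x > 0" if "x \<in> I" for x
    using F_pos that unfolding I_def by blast
  have \<sigma>pos: "\<sigma> x > 0" if "x \<in> I" for x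
    using F1pos[OF that] unfolding \<sigma>_def by simp
  have \<sigma>2: "\<sigma> x ^ 2 = F1 x" if "x \<in> I" for x
    using F1pos[OF that] unfolding \<sigma>_def by simp
  have d\<sigma>: "(\<sigma> has_real_derivative F2 x / (2 * \<sigma> x)) (at x)" if "x \<in> I" for x
  proof -
    have "(\<sigma> has_real_derivative inverse (sqrt (F1 x)) / 2 * F2 x) (at x)"
      unfolding \<sigma>_def using F1pos[OF that]
      by (intro derivative_eq_intros DERIV_chain2[OF DERIV_real_sqrt] dF1[OF that]) auto
    then show ?thesis unfolding \<sigma>_def by (simp add: field_simps)
  qed
  have du: "(u has_real_derivative u1 x) (at x)" if "x \<in> I" for x
    unfolding u_def u1_def using \<sigma>pos[OF that] \<sigma>2[OF that, symmetric]
    by (auto intro!: derivative_eq_intros dF[OF that] d\<sigma>[OF that] simp: field_simps power_def)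
  have du1: "(u1 has_real_derivative - p x * u x) (at x)" if "x \<in> I" for x
  proof -
    have S: "F3 x / F1 x - (3/2) * (F2 x / F1 x)^2 = 2 * p x"
      using F_S that unfolding I_def schwarzian_val_def by (auto simp: algebra_simps)
    have p: "p x = (F3 x / F1 x - (3/2) * (F2 x / F1 x)^2) / 2" using S by simp
    show ?thesis
      unfolding u_def u1_def p using \<sigma>pos[OF that] \<sigma>2[OF that, symmetric]
      by (auto intro!: derivative_eq_intros dF[OF that] d\<sigma>[OF that] dF2[OF that] simp: field_simps power_def)
  qed
  have r2: "r x ^ 2 = A x" for x
    unfolding r_def A_def using inner_ge_zero[of "R x"] real_sqrt_pow2 by blast
  have rnn: "r x \<ge> 0" for x unfolding r_def A_def by simp
  have r_norm: "r x = norm (R x)" for x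
    unfolding r_def A_def by (simp add: norm_eq_sqrt_inner)
  have dr: "(r has_real_derivative P x / r x) (at x)" if "x \<in> I" "r x > 0" for x
  proof -
    have Ap: "A x > 0" using that r2[of x] by (metis zero_less_power)
    show ?thesis
      unfolding r_def using Ap
      by (auto intro!: derivative_eq_intros DERIV_chain2[OF DERIV_real_sqrt] dA[OF that(1)]
          simp: field_simps)
  qed
  have dw: "(w has_real_derivative w1 x) (at x)" if "x \<in> I" "r x > 0" for x
    unfolding w_def w1_def using spos[OF that(1)] that(2)
    by (auto intro!: derivative_eq_intros dr[OF that] ds[OF that(1)] simp: field_simps power_def)
  have dw1: "(w1 has_real_derivative w2 x) (at x)" if "x \<in> I" "r x > 0" for x
    unfolding w1_def w2_def using spos[OF that(1)] that(2)
    by (auto intro!: derivative_eq_intros dr[OF that] ds[OF that(1)] dP[OF that(1)] dC[OF that(1)]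
        simp: field_simps power_def)
  have key: "w2 x + p x * w x \<ge> 0" if "x \<in> I" "r x > 0" for x
  proof -
    have sp: "s x > 0" using spos[OF that(1)] .
    have rp: "r x > 0" using that(2) .
    have n2: "(norm (\<phi>1 x))^2 = s x ^ 4" using s4[OF that(1)] unfolding B_def
      by (simp add: power2_norm_eq_inner)
    have n4: "(norm (\<phi>1 x))^4 = s x ^ 8"
    proof -
      have "(norm (\<phi>1 x))^4 = ((norm (\<phi>1 x))^2)^2" by simp
      then show ?thesis using n2 by simp
    qed
    have nD: "(norm (\<phi>2 x))^2 = D x" unfolding D_def by (simp add: power2_norm_eq_inner)
    define S1 where "S1 = E x / s x ^ 4 - 3 * C x ^ 2 / s x ^ 8 + 3/2 * D x / s x ^ 4"
    have S1le: "S1 \<le> 2 * p x"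
    proof -
      have "ahlfors_S1 (\<phi>1 x) (\<phi>2 x) (\<phi>3 x) \<le> 2 * p x" using phi_S that(1) unfolding I_def by blast
      then show ?thesis unfolding ahlfors_S1_def S1_def n2 n4 nD C_def E_def by simp
    qed
    define tot where "tot = (B x)^2 * (B x + Q x) * (A x) - (B x)^2 * (P x)^2 - P x * C x * B x * A x
        + (1/4) * (A x)^2 * (B x * D x - (C x)^2)"
    have tot: "tot \<ge> 0"
      using key_ineq[of "\<phi>1 x" "R x" "\<phi>2 x"] Bpos[OF that(1)]
      unfolding tot_def A_def B_def C_def D_def P_def Q_def by (simp add: inner_commute)
    have eq: "w2 x + S1 / 2 * w x = tot / (r x ^ 3 * s x ^ 9)"
      unfolding w2_def w_def S1_def tot_def r2[symmetric] s4[OF that(1), symmetric]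
      using sp rp by (simp add: field_simps power_def)
    have "0 \<le> tot / (r x ^ 3 * s x ^ 9)" using tot sp rp by simp
    moreover have "0 \<le> (p x - S1 / 2) * w x" using S1le sp rp unfolding w_def by simp
    ultimately show ?thesis using eq by (simp add: algebra_simps)
  qed
  have upos: "u x > 0" if "x \<in> I" "a < x" for x
  proof -
    have "F a < F x"
    proof (rule DERIV_pos_imp_increasing[OF that(2)])
      fix y assume "a \<le> y" "y \<le> x"
      then have "y \<in> I" using aI that(1) unfolding I_def by auto
      then show "\<exists>z. DERIV F y :> z \<and> z > 0" using dF F1pos by blast
    qed
    then show ?thesis unfolding u_def using \<sigma>pos[OF that(1)] by simp
  qed
  have dW: "(W has_real_derivative u x * (w2 x + p x * w x)) (at x)" if "x \<in> I" "r x > 0" for x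
    unfolding W_def
    by (auto intro!: derivative_eq_intros dw1[OF that] du[OF that(1)] dw[OF that] du1[OF that(1)]
        simp: algebra_simps)
  have dh: "((\<lambda>x. w x / u x) has_real_derivative W x / (u x)^2) (at x)" if "x \<in> I" "r x > 0" "u x \<noteq> 0" for x
    unfolding W_def using that(3)
    by (auto intro!: derivative_eq_intros du[OF that(1)] dw[OF that(1,2)] simp: field_simps power_def)
  have cr: "(f \<longlongrightarrow> f x) (at_right x)" "(f \<longlongrightarrow> f x) (at_left x)"
    if "(f has_real_derivative D) (at x)" for f :: "real \<Rightarrow> real" and D x
    using DERIV_isCont[OF that] unfolding isCont_def filterlim_at_split by auto
  have Acont: "(A \<longlongrightarrow> A x) (at_right x)" "(A \<longlongrightarrow> A x) (at_left x)" if "x \<in> I" for x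
    using cr[OF dA[OF that]] by auto
  have rcont: "(r \<longlongrightarrow> r x) (at_right x)" "(r \<longlongrightarrow> r x) (at_left x)" if "x \<in> I" for x
    unfolding r_def using Acont[OF that] by (auto intro!: tendsto_intros)
  have Ra: "R a = 0" unfolding R_def by simp
  have ra: "r a = 0" unfolding r_def A_def Ra by simp
  have Pa: "P a = 0" unfolding P_def Ra by simp
  have ua: "u a = 0" unfolding u_def by simp
  have normB: "norm (\<phi>1 x) = s x ^ 2" if "x \<in> I" for x
    unfolding s_def B_def using Bpos[OF that] unfolding B_def by (simp add: norm_eq_sqrt_inner)
  have L1: "((\<lambda>x. r x / (x - a)) \<longlongrightarrow> norm (\<phi>1 a)) (at_right a)"
  proof -
    have "((\<lambda>y. (R y - R a) /\<^sub>R (y - a)) \<longlongrightarrow> \<phi>1 a) (at a)"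
      by (rule vdiff_quot[OF dR[OF aI]])
    then have "((\<lambda>y. (R y - R a) /\<^sub>R (y - a)) \<longlongrightarrow> \<phi>1 a) (at_right a)"
      unfolding filterlim_at_split by auto
    then have "((\<lambda>y. norm ((R y - R a) /\<^sub>R (y - a))) \<longlongrightarrow> norm (\<phi>1 a)) (at_right a)"
      by (rule tendsto_norm)
    then show ?thesis
    proof (rule Lim_transform_eventually)
      show "\<forall>\<^sub>F y in at_right a. norm ((R y - R a) /\<^sub>R (y - a)) = r y / (y - a)"
        unfolding eventually_at_right_field
        by (rule exI[of _ "a+1"]) (auto simp: Ra r_norm divide_inverse mult.commute)
    qed
  qed
  have L2: "((\<lambda>x. u x / (x - a)) \<longlongrightarrow> F1 a / \<sigma> a) (at_right a)"
  proof -
    have "((\<lambda>y. (F y - F a) / (y - a)) \<longlongrightarrow> F1 a) (at a)"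
      using dF[OF aI] unfolding has_field_derivative_iff by simp
    then have "((\<lambda>y. (F y - F a) / (y - a)) \<longlongrightarrow> F1 a) (at_right a)"
      unfolding filterlim_at_split by auto
    then have "((\<lambda>y. (F y - F a) / (y - a) / \<sigma> y) \<longlongrightarrow> F1 a / \<sigma> a) (at_right a)"
      using cr(1)[OF d\<sigma>[OF aI]] \<sigma>pos[OF aI] by (intro tendsto_divide) auto
    then show ?thesis unfolding u_def by (simp add: field_simps)
  qed
  have ev_rpos: "\<forall>\<^sub>F x in at_right a. r x > 0"
  proof -
    have "\<forall>\<^sub>F x in at_right a. r x / (x - a) > 0"
      using order_tendstoD(1)[OF L1, of 0] normB[OF aI] spos[OF aI] by simp
    moreover have "\<forall>\<^sub>F x in at_right a. x > a" by (simp add: eventually_at_right_less)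
    ultimately show ?thesis by eventually_elim (auto simp: zero_less_divide_iff)
  qed
  have ev_I: "\<forall>\<^sub>F x in at_right a. x \<in> I \<and> a < x"
    unfolding eventually_at_right_field using ab unfolding I_def
    by (intro exI[of _ 1]) auto
  define q1 where "q1 = (\<lambda>x. r x / (x - a))"
  define q2 where "q2 = (\<lambda>x. u x / (x - a))"
  have L1': "(q1 \<longlongrightarrow> norm (\<phi>1 a)) (at_right a)" using L1 unfolding q1_def .
  have L2': "(q2 \<longlongrightarrow> F1 a / \<sigma> a) (at_right a)" using L2 unfolding q2_def .
  have Wlim: "(W \<longlongrightarrow> 0) (at_right a)"
  proof -
    have "((\<lambda>x. P x * q2 x / (q1 x * s x) - r x * C x / (2 * s x ^ 5) * u x
         - r x / s x * u1 x) \<longlongrightarrow>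
        0 * (F1 a / \<sigma> a) / (norm (\<phi>1 a) * s a) - 0 * C a / (2 * s a ^ 5) * 0 - 0 / s a * u1 a) (at_right a)"
      using cr(1)[OF dP[OF aI]] L2' L1' cr(1)[OF ds[OF aI]] rcont(1)[OF aI] cr(1)[OF dC[OF aI]]
        cr(1)[OF du[OF aI]] cr(1)[OF du1[OF aI]] Pa ra ua normB[OF aI] spos[OF aI]
      by (intro tendsto_intros) auto
    then have "((\<lambda>x. P x * q2 x / (q1 x * s x) - r x * C x / (2 * s x ^ 5) * u x
         - r x / s x * u1 x) \<longlongrightarrow> 0) (at_right a)" by simp
    then show ?thesis
    proof (rule Lim_transform_eventually)
      show "\<forall>\<^sub>F x in at_right a. P x * q2 x / (q1 x * s x) - r x * C x / (2 * s x ^ 5) * u x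
         - r x / s x * u1 x = W x"
        using ev_rpos ev_I
      proof eventually_elim
        case (elim x)
        then show ?case unfolding W_def w1_def w_def q1_def q2_def using spos[of x]
          by (simp add: field_simps)
      qed
    qed
  qed
  have hlim: "((\<lambda>x. w x / u x) \<longlongrightarrow> c) (at_right a)"
  proof -
    have "((\<lambda>x. q1 x / s x / q2 x) \<longlongrightarrow> norm (\<phi>1 a) / s a / (F1 a / \<sigma> a)) (at_right a)"
      using L1' L2' cr(1)[OF ds[OF aI]] spos[OF aI] \<sigma>pos[OF aI] F1pos[OF aI]
      by (intro tendsto_intros) auto
    moreover have "norm (\<phi>1 a) / s a / (F1 a / \<sigma> a) = c"
      unfolding c_def normB[OF aI] \<sigma>2[OF aI, symmetric] using spos[OF aI] \<sigma>pos[OF aI]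
      by (simp add: field_simps power_def)
    ultimately have "((\<lambda>x. q1 x / s x / q2 x) \<longlongrightarrow> c) (at_right a)" by simp
    then show ?thesis
    proof (rule Lim_transform_eventually)
      show "\<forall>\<^sub>F x in at_right a. q1 x / s x / q2 x = w x / u x"
        using ev_I
      proof eventually_elim
        case (elim x)
        then show ?case unfolding w_def q1_def q2_def using spos[of x] upos[of x]
          by (simp add: field_simps)
      qed
    qed
  qed
  have interval: "c * u t \<le> w t" if "a < t" "t \<le> b" and pos: "\<forall>x. a < x \<and> x < t \<longrightarrow> r x > 0" for t
  proof -
    have xI: "x \<in> I" if "a \<le> x" "x \<le> t" for x using that \<open>t \<le> b\<close> ab unfolding I_def by auto
    have Wmono: "W x \<le> W y" if "a < x" "x \<le> y" "y < t" for x y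
    proof (rule DERIV_nonneg_imp_nondecreasing[OF that(2)])
      fix z assume z: "x \<le> z" "z \<le> y"
      then have zI: "z \<in> I" and rz: "r z > 0" and az: "a < z" using xI pos that by auto
      show "\<exists>d. DERIV W z :> d \<and> d \<ge> 0"
        using dW[OF zI rz] upos[OF zI az] key[OF zI rz]
        by (intro exI[of _ "u z * (w2 z + p z * w z)"] conjI) auto
    qed
    have W0: "0 \<le> W y" if "a < y" "y < t" for y
    proof -
      have "\<forall>\<^sub>F x in at_right a. W x \<le> W y"
        unfolding eventually_at_right_field using that Wmono by (intro exI[of _ y]) auto
      then show ?thesis using tendsto_upperbound[OF Wlim] trivial_limit_at_right_real by blast
    qed
    have hmono: "w x / u x \<le> w y / u y" if "a < x" "x \<le> y" "y < t" for x y
    proof (rule DERIV_nonneg_imp_nondecreasing[OF that(2)])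
      fix z assume z: "x \<le> z" "z \<le> y"
      then have zI: "z \<in> I" and rz: "r z > 0" and az: "a < z" and zt: "z < t" using xI pos that by auto
      show "\<exists>d. DERIV (\<lambda>x. w x / u x) z :> d \<and> d \<ge> 0"
        using dh[OF zI rz] upos[OF zI az] W0[OF az zt]
        by (intro exI[of _ "W z / (u z)^2"] conjI) auto
    qed
    have cu: "c * u y \<le> w y" if "a < y" "y < t" for y
    proof -
      have "\<forall>\<^sub>F x in at_right a. w x / u x \<le> w y / u y"
        unfolding eventually_at_right_field using that hmono by (intro exI[of _ y]) auto
      then have "c \<le> w y / u y" using tendsto_upperbound[OF hlim] trivial_limit_at_right_real by blast
      then show ?thesis using upos[of y] xI[of y] that by (simp add: pos_le_divide_eq)
    qed
    have tI: "t \<in> I" using xI \<open>a < t\<close> by auto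
    have "(w \<longlongrightarrow> w t) (at_left t)"
      unfolding w_def using rcont(2)[OF tI] cr(2)[OF ds[OF tI]] spos[OF tI]
      by (intro tendsto_divide) auto
    moreover have "((\<lambda>x. c * u x) \<longlongrightarrow> c * u t) (at_left t)"
      using cr(2)[OF du[OF tI]] by (intro tendsto_intros)
    moreover have "\<forall>\<^sub>F x in at_left t. c * u x \<le> w x"
      unfolding eventually_at_left_field using cu \<open>a < t\<close> by (intro exI[of _ a]) auto
    ultimately show ?thesis by (rule tendsto_le[OF trivial_limit_at_left_real])
  qed
  have cpos: "c > 0" unfolding c_def using spos[OF aI] \<sigma>pos[OF aI] by simp
  have allpos: "\<forall>x. a < x \<and> x < b \<longrightarrow> r x > 0"
  proof (rule ccontr)
    assume neg: "\<not> (\<forall>x. a < x \<and> x < b \<longrightarrow> r x > 0)"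
    define Z where "Z = {x. a < x \<and> x < b \<and> r x = 0}"
    have Zne: "Z \<noteq> {}" using neg rnn unfolding Z_def by (auto simp: le_less)
    have Zbdd: "bdd_below Z" unfolding Z_def by (rule bdd_belowI[of _ a]) auto
    define t where "t = Inf Z"
    obtain d where d: "d > a" "\<forall>y>a. y < d \<longrightarrow> r y > 0"
      using ev_rpos unfolding eventually_at_right_field by blast
    have "d \<le> t" unfolding t_def
      by (rule cInf_greatest[OF Zne]) (use d in \<open>force simp: Z_def\<close>)
    then have at: "a < t" using d by simp
    obtain z0 where "z0 \<in> Z" using Zne by blast
    then have "t \<le> z0" unfolding t_def using cInf_lower[OF _ Zbdd] by blast
    then have tb: "t < b" using \<open>z0 \<in> Z\<close> unfolding Z_def by simp
    have tI: "t \<in> I" using at tb ab unfolding I_def by auto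
    have post: "\<forall>x. a < x \<and> x < t \<longrightarrow> r x > 0"
    proof (intro allI impI)
      fix x assume x: "a < x \<and> x < t"
      then have "x \<notin> Z" using cInf_lower[OF _ Zbdd] unfolding t_def by force
      then show "r x > 0" using x tb rnn[of x] unfolding Z_def by (auto simp: le_less)
    qed
    have rt: "r t = 0"
    proof (rule ccontr)
      assume "r t \<noteq> 0"
      then have "r t > 0" using rnn[of t] by simp
      then have "\<forall>\<^sub>F x in at_right t. r x > 0" using order_tendstoD(1)[OF rcont(1)[OF tI]] by blast
      then obtain e where e: "e > t" "\<forall>y>t. y < e \<longrightarrow> r y > 0"
        unfolding eventually_at_right_field by blast
      have "e \<le> t" unfolding t_def
      proof (rule cInf_greatest[OF Zne])
        fix z assume z: "z \<in> Z"
        then have "t \<le> z" unfolding t_def using cInf_lower[OF _ Zbdd] by blast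
        moreover have "z \<noteq> t" using z \<open>r t > 0\<close> unfolding Z_def by auto
        ultimately have "t < z" by simp
        then show "e \<le> z" using e(2)[rule_format, of z] z unfolding Z_def by force
      qed
      then show False using e by simp
    qed
    have "c * u t \<le> w t" using interval[OF at _ post] tb by simp
    moreover have "w t = 0" unfolding w_def rt by simp
    moreover have "c * u t > 0" using cpos upos[OF tI at] by simp
    ultimately show False by simp
  qed
  have fin: "c * u b \<le> w b" using interval[OF ab(2) order_refl] allpos by blast
  have sq1: "sqrt (F1 x) = \<sigma> x" for x unfolding \<sigma>_def ..
  have sq2: "sqrt (norm (\<phi>1 x)) = s x" if "x \<in> I" for x
    unfolding s_def B_def by (simp add: norm_eq_sqrt_inner)
  have nb: "norm (\<phi> b - \<phi> a) = r b" unfolding r_norm R_def ..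
  show ?thesis
    unfolding sq1 sq2[OF aI] sq2[OF bI] nb
    using fin spos[OF aI] spos[OF bI] \<sigma>pos[OF aI] \<sigma>pos[OF bI]
    unfolding c_def u_def w_def by (simp add: field_simps)
qed

lemma F1_pos:
  fixes F1 F2 :: "real \<Rightarrow> real"
  assumes F_d2: "\<forall>x\<in>{-1<..<1}. (F1 has_real_derivative F2 x) (at x)"
    and F_nz: "\<forall>x\<in>{-1<..<1}. F1 x \<noteq> 0"
    and F10: "F1 0 = 1"
  shows "\<forall>x\<in>{-1<..<1}. F1 x > 0"
proof
  fix y :: real assume y: "y \<in> {-1<..<1}"
  show "F1 y > 0"
  proof (rule ccontr)
    assume "\<not> F1 y > 0"
    then have neg: "F1 y \<le> 0" by simp
    have cont: "isCont F1 x" if "x \<in> {-1<..<1}" for x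
      using F_d2 that DERIV_isCont by blast
    show False
    proof (cases "y \<le> 0")
      case True
      obtain x where "x \<ge> y" "x \<le> 0" "F1 x = 0"
        using IVT[of F1 y 0 0] neg F10 True cont y by force
      then show False using F_nz y by force
    next
      case False
      obtain x where "x \<ge> 0" "x \<le> y" "F1 x = 0"
        using IVT2[of F1 y 0 0] neg F10 False cont y by force
      then show False using F_nz y by force
    qed
  qed
qed



theorem theorem2:
  fixes p F F1 F2 F3 :: "real \<Rightarrow> real"
    and \<phi> \<phi>1 \<phi>2 \<phi>3 :: "real \<Rightarrow> 'a::euclidean_space"
  assumes p_pos: "\<forall>x\<in>{-1<..<1}. p x > 0"
    and p_cont: "continuous_on {-1<..<1} p"
    and p_even: "\<forall>x\<in>{-1<..<1}. p (-x) = p x"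
    and p_disc: "disconjugate p"
    and F_d1: "\<forall>x\<in>{-1<..<1}. (F has_real_derivative F1 x) (at x)"
    and F_d2: "\<forall>x\<in>{-1<..<1}. (F1 has_real_derivative F2 x) (at x)"
    and F_d3: "\<forall>x\<in>{-1<..<1}. (F2 has_real_derivative F3 x) (at x)"
    and F_nz: "\<forall>x\<in>{-1<..<1}. F1 x \<noteq> 0"
    and F_S: "\<forall>x\<in>{-1<..<1}. schwarzian_val (F1 x) (F2 x) (F3 x) = 2 * p x"
    and F_init: "F 0 = 0" "F1 0 = 1" "F2 0 = 0"
    and phi_d1: "\<forall>x\<in>{-1<..<1}. (\<phi> has_vector_derivative \<phi>1 x) (at x)"
    and phi_d2: "\<forall>x\<in>{-1<..<1}. (\<phi>1 has_vector_derivative \<phi>2 x) (at x)"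
    and phi_d3: "\<forall>x\<in>{-1<..<1}. (\<phi>2 has_vector_derivative \<phi>3 x) (at x)"
    and phi_C3: "continuous_on {-1<..<1} \<phi>3"
    and phi_nz: "\<forall>x\<in>{-1<..<1}. \<phi>1 x \<noteq> 0"
    and phi_S: "\<forall>x\<in>{-1<..<1}. ahlfors_S1 (\<phi>1 x) (\<phi>2 x) (\<phi>3 x) \<le> 2 * p x"
    and x12: "x1 \<in> {-1<..<1}" "x2 \<in> {-1<..<1}"
  shows "norm (\<phi> x1 - \<phi> x2) / sqrt (norm (\<phi>1 x1) * norm (\<phi>1 x2))
           \<ge> \<bar>F x1 - F x2\<bar> / sqrt (F1 x1 * F1 x2)"
  proof -
  have Fpos: "\<forall>x\<in>{-1<..<1}. F1 x > 0" using F1_pos[OF F_d2 F_nz F_init(2)] .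
  have incr: "F a < F b" if "-1 < a" "a < b" "b < 1" for a b
  proof (rule DERIV_pos_imp_increasing[OF that(2)])
    fix y assume "a \<le> y" "y \<le> b"
    then have "y \<in> {-1<..<1}" using that by auto
    then show "\<exists>z. DERIV F y :> z \<and> z > 0" using F_d1 Fpos by blast
  qed
  note M = main[OF F_d1 F_d2 F_d3 Fpos F_S phi_d1 phi_d2 phi_d3 phi_nz phi_S]
  consider "x1 < x2" | "x1 = x2" | "x2 < x1" by linarith
  then show ?thesis
  proof cases
    case 1
    have "(F x2 - F x1) / (sqrt (F1 x1) * sqrt (F1 x2))
           \<le> norm (\<phi> x2 - \<phi> x1) / (sqrt (norm (\<phi>1 x1)) * sqrt (norm (\<phi>1 x2)))"
      using M[of x1 x2] x12 1 by auto
    moreover have "\<bar>F x1 - F x2\<bar> = F x2 - F x1" using incr[of x1 x2] x12 1 by auto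
    ultimately show ?thesis by (simp add: real_sqrt_mult norm_minus_commute)
  next
    case 2
    then show ?thesis by simp
  next
    case 3
    have "(F x1 - F x2) / (sqrt (F1 x2) * sqrt (F1 x1))
           \<le> norm (\<phi> x1 - \<phi> x2) / (sqrt (norm (\<phi>1 x2)) * sqrt (norm (\<phi>1 x1)))"
      using M[of x2 x1] x12 3 by auto
    moreover have "\<bar>F x1 - F x2\<bar> = F x1 - F x2" using incr[of x2 x1] x12 3 by auto
    ultimately show ?thesis by (simp add: real_sqrt_mult mult.commute)
  qed
qed

end
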